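(* Let $(X,d_X)$ and $(Y,d_Y)$ be metric spaces and let $d$ be a partial distance-preserving metric on $X\times Y$ with $d_\infty\le d$. Then $(X\times Y,d)$ is ultrametric if and only if for all compact sets $W\subseteq X$, $Z\subseteq Y$ and every $\varepsilon>0$ both $$\mathcal N_\varepsilon(W\times Z)=\mathcal M_\varepsilon(W\times Z)\quad\text{and}\quad \mathcal M_\varepsilon(W\times Z)=\mathcal M_\varepsilon(W)\cdot\mathcal M_\varepsilon(Z)$$ hold, where the quantities for $W$, $Z$, $W\times Z$ are computed in $(X,d_X)$, $(Y,d_Y)$, $(X\times Y,d)$ respectively.
   Context: $d_\infty((x_1,y_1),(x_2,y_2))=\max\{d_X(x_1,x_2),d_Y(y_1,y_2)\}$. A metric $d$ on $X\times Y$ is partial distance-preserving if $d((x_1,y),(x_2,y))=d_X(x_1,x_2)$ and $d((x,y_1),(x,y_2))=d_Y(y_1,y_2)$ for all $x,x_1,x_2\in X$, $y,y_1,y_2\in Y$. Ultrametric: $\rho(a,b)\le\max\{\rho(a,c),\rho(c,b)\}$. In a metric space $(M,\rho)$ with closed balls $B(c,r)=\{x:\rho(x,c)\le r\}$: $C$ is an $\varepsilon$-net for $V$ if $V\subseteq\bigcup_{c\in C}B(c,\varepsilon)$; $A$ is $\varepsilon$-distinguishable if $\rho(a,b)>\varepsilon$ for distinct $a,b\in A$. For totally bounded $V$, the covering number $\mathcal N_\varepsilon(V)$ is the smallest cardinality of a subset of $V$ that is an $\varepsilon$-net for $V$, and the packing number $\mathcal M_\varepsilon(V)$ is the maximal cardinality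 of an $\varepsilon$-distinguishable subset of $V$. *)

theory Defs
  imports "HOL-Analysis.Analysis"
begin

definition is_eps_net :: "'a set \<Rightarrow> ('a \<Rightarrow> 'a \<Rightarrow> real) \<Rightarrow> real \<Rightarrow> 'a set \<Rightarrow> 'a set \<Rightarrow> bool" where
  "is_eps_net M d \<epsilon> C V \<longleftrightarrow> V \<subseteq> (\<Union>c\<in>C. Metric_space.mcball M d c \<epsilon>)"

definition eps_distinguishable :: "('a \<Rightarrow> 'a \<Rightarrow> real) \<Rightarrow> real \<Rightarrow> 'a set \<Rightarrow> bool" where
  "eps_distinguishable d \<epsilon> A \<longleftrightarrow> (\<forall>a\<in>A. \<forall>b\<in>A. a \<noteq> b \<longrightarrow> d a b > \<epsilon>)"

definition covering_number :: "'a set \<Rightarrow> ('a \<Rightarrow> 'a \<Rightarrow> real) \<Rightarrow> real \<Rightarrow> 'a set \<Rightarrow> nat" where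
  "covering_number M d \<epsilon> V =
     (LEAST n. \<exists>C. C \<subseteq> V \<and> finite C \<and> card C = n \<and> is_eps_net M d \<epsilon> C V)"

definition packing_number :: "('a \<Rightarrow> 'a \<Rightarrow> real) \<Rightarrow> real \<Rightarrow> 'a set \<Rightarrow> nat" where
  "packing_number d \<epsilon> V =
     (GREATEST n. \<exists>A. A \<subseteq> V \<and> finite A \<and> card A = n \<and> eps_distinguishable d \<epsilon> A)"

definition ultrametric_on :: "'a set \<Rightarrow> ('a \<Rightarrow> 'a \<Rightarrow> real) \<Rightarrow> bool" where
  "ultrametric_on M d \<longleftrightarrow> (\<forall>a\<in>M. \<forall>b\<in>M. \<forall>c\<in>M. d a b \<le> max (d a c) (d c b))"

definition partial_distance_preserving ::
  "'a set \<Rightarrow> ('a \<Rightarrow> 'a \<Rightarrow> real) \<Rightarrow> 'b set \<Rightarrow> ('b \<Rightarrow> 'b \<Rightarrow> real) \<Rightarrow> ('a \<times> 'b \<Rightarrow> 'a \<times> 'b \<Rightarrow> real) \<Rightarrow> bool" where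
  "partial_distance_preserving X dX Y dY d \<longleftrightarrow>
     (\<forall>x1\<in>X. \<forall>x2\<in>X. \<forall>y\<in>Y. d (x1, y) (x2, y) = dX x1 x2) \<and>
     (\<forall>x\<in>X. \<forall>y1\<in>Y. \<forall>y2\<in>Y. d (x, y1) (x, y2) = dY y1 y2)"

definition sup_dist :: "('a \<Rightarrow> 'a \<Rightarrow> real) \<Rightarrow> ('b \<Rightarrow> 'b \<Rightarrow> real) \<Rightarrow> 'a \<times> 'b \<Rightarrow> 'a \<times> 'b \<Rightarrow> real" where
  "sup_dist dX dY p q = max (dX (fst p) (fst q)) (dY (snd p) (snd q))"

end

theory Submission
  imports Defs
begin

lemma pack_bound_net:
  assumes ms: "Metric_space M d" and VM: "V \<subseteq> M" and um: "ultrametric_on V d"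
    and C: "C \<subseteq> V" "finite C" "is_eps_net M d \<epsilon> C V"
    and A: "A \<subseteq> V" "finite A" "eps_distinguishable d \<epsilon> A"
  shows "card A \<le> card C"
proof -
  interpret Metric_space M d by (rule ms)
  have ex: "\<forall>a\<in>A. \<exists>c\<in>C. d c a \<le> \<epsilon>"
  proof
    fix a assume "a \<in> A"
    then have "a \<in> (\<Union>c\<in>C. mcball c \<epsilon>)" using C(3) A(1) unfolding is_eps_net_def by blast
    then obtain c where "c \<in> C" "a \<in> mcball c \<epsilon>" by blast
    then show "\<exists>c\<in>C. d c a \<le> \<epsilon>" by auto
  qed
  define f where "f a = (SOME c. c \<in> C \<and> d c a \<le> \<epsilon>)" for a
  have f: "f a \<in> C \<and> d (f a) a \<le> \<epsilon>" if "a \<in> A" for a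
    using someI_ex[of "\<lambda>c. c \<in> C \<and> d c a \<le> \<epsilon>"] ex that unfolding f_def by blast
  have "inj_on f A"
  proof (rule inj_onI, rule ccontr)
    fix a b assume ab: "a \<in> A" "b \<in> A" "f a = f b" "a \<noteq> b"
    then have "d a b > \<epsilon>" using A(3) unfolding eps_distinguishable_def by blast
    moreover have "d a b \<le> max (d a (f a)) (d (f a) b)"
      using um ab f[of a] C(1) A(1) unfolding ultrametric_on_def by blast
    moreover have "d a (f a) = d (f a) a" using f[of a] ab C(1) A(1) VM commute by blast
    ultimately show False using f[of a] f[of b] ab by auto
  qed
  moreover have "f ` A \<subseteq> C" using f by auto
  ultimately show ?thesis using card_inj_on_le C(2) by blast
qed

lemma pack_facts:
  assumes ms: "Metric_space M d" and VM: "V \<subseteq> M" and um: "ultrametric_on V d"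
    and C: "C \<subseteq> V" "finite C" "is_eps_net M d \<epsilon> C V" and eps: "\<epsilon> > 0"
  shows "\<exists>A0. A0 \<subseteq> V \<and> finite A0 \<and> card A0 = packing_number d \<epsilon> V \<and>
            eps_distinguishable d \<epsilon> A0 \<and> is_eps_net M d \<epsilon> A0 V"
    and "\<And>A. A \<subseteq> V \<Longrightarrow> finite A \<Longrightarrow> eps_distinguishable d \<epsilon> A \<Longrightarrow> card A \<le> packing_number d \<epsilon> V"
    and "covering_number M d \<epsilon> V = packing_number d \<epsilon> V"
proof -
  interpret Metric_space M d by (rule ms)
  let ?P = "\<lambda>n. \<exists>A. A \<subseteq> V \<and> finite A \<and> card A = n \<and> eps_distinguishable d \<epsilon> A"
  have P0: "?P 0" by (rule exI[of _ "{}"]) (auto simp: eps_distinguishable_def)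
  have bnd: "y \<le> card C" if "?P y" for y
    using that pack_bound_net[OF ms VM um C] by blast
  have PG: "?P (packing_number d \<epsilon> V)"
    unfolding packing_number_def using GreatestI_nat[of ?P 0 "card C", OF P0 bnd] by simp
  show le: "\<And>A. A \<subseteq> V \<Longrightarrow> finite A \<Longrightarrow> eps_distinguishable d \<epsilon> A \<Longrightarrow> card A \<le> packing_number d \<epsilon> V"
    unfolding packing_number_def using Greatest_le_nat[of ?P _ "card C", OF _ bnd] by auto
  from PG obtain A0 where A0: "A0 \<subseteq> V" "finite A0" "card A0 = packing_number d \<epsilon> V"
    "eps_distinguishable d \<epsilon> A0" by blast
  have net: "is_eps_net M d \<epsilon> A0 V"
    unfolding is_eps_net_def
  proof
    fix v assume v: "v \<in> V"
    show "v \<in> (\<Union>c\<in>A0. mcball c \<epsilon>)"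
    proof (rule ccontr)
      assume nv: "v \<notin> (\<Union>c\<in>A0. mcball c \<epsilon>)"
      have far: "\<forall>a\<in>A0. d a v > \<epsilon>"
      proof
        fix a assume a: "a \<in> A0"
        then have "v \<notin> mcball a \<epsilon>" using nv by blast
        moreover have "a \<in> M" "v \<in> M" using a A0(1) VM v by auto
        ultimately show "d a v > \<epsilon>" by simp
      qed
      have vM: "v \<in> M" using v VM by auto
      have vn: "v \<notin> A0"
      proof
        assume "v \<in> A0"
        then have "d v v > \<epsilon>" using far by blast
        then show False using vM eps by simp
      qed
      have "eps_distinguishable d \<epsilon> (insert v A0)"
        unfolding eps_distinguishable_def
      proof (intro ballI impI)
        fix a b assume ab: "a \<in> insert v A0" "b \<in> insert v A0" "a \<noteq> b"
        show "d a b > \<epsilon>"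
        proof (cases "a = v")
          case True
          then have "b \<in> A0" using ab by auto
          then have "d b v > \<epsilon>" "b \<in> M" using far A0(1) VM by auto
          then show ?thesis using True commute vM by simp
        next
          case False
          then have a: "a \<in> A0" using ab by auto
          show ?thesis
          proof (cases "b = v")
            case True then show ?thesis using far a by simp
          next
            case False then show ?thesis using a ab A0(4) unfolding eps_distinguishable_def by auto
          qed
        qed
      qed
      then have "card (insert v A0) \<le> packing_number d \<epsilon> V"
        using le A0 v by auto
      then show False using vn A0 by simp
    qed
  qed
  show "\<exists>A0. A0 \<subseteq> V \<and> finite A0 \<and> card A0 = packing_number d \<epsilon> V \<and>
            eps_distinguishable d \<epsilon> A0 \<and> is_eps_net M d \<epsilon> A0 V"
    using A0 net by blast
  let ?Q = "\<lambda>n. \<exists>C. C \<subseteq> V \<and> finite C \<and> card C = n \<and> is_eps_net M d \<epsilon> C V"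
  have Q: "?Q (card A0)" using A0 net by blast
  have c1: "covering_number M d \<epsilon> V \<le> card A0"
    unfolding covering_number_def using Least_le[of ?Q, OF Q] by simp
  have "?Q (covering_number M d \<epsilon> V)"
    unfolding covering_number_def using LeastI[of ?Q, OF Q] by simp
  then obtain C' where C': "C' \<subseteq> V" "finite C'" "card C' = covering_number M d \<epsilon> V"
    "is_eps_net M d \<epsilon> C' V" by blast
  have "card A0 \<le> card C'" using pack_bound_net[OF ms VM um C'(1,2,4) A0(1,2,4)] .
  then show "covering_number M d \<epsilon> V = packing_number d \<epsilon> V" using c1 C' A0 by simp
qed

lemma pack_finite_le:
  assumes "finite V" "\<And>A. A \<subseteq> V \<Longrightarrow> eps_distinguishable d \<epsilon> A \<Longrightarrow> card A \<le> k"
  shows "packing_number d \<epsilon> V \<le> k"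
proof -
  let ?P = "\<lambda>n. \<exists>A. A \<subseteq> V \<and> finite A \<and> card A = n \<and> eps_distinguishable d \<epsilon> A"
  have P0: "?P 0" by (rule exI[of _ "{}"]) (auto simp: eps_distinguishable_def)
  have bnd: "y \<le> card V" if "?P y" for y
  proof -
    from that obtain A where A: "A \<subseteq> V" "card A = y" by blast
    have "card A \<le> card V" using card_mono[OF assms(1) A(1)] .
    then show ?thesis using A(2) by simp
  qed
  have "?P (packing_number d \<epsilon> V)"
    unfolding packing_number_def using GreatestI_nat[of ?P 0 "card V", OF P0 bnd] by simp
  then obtain A where A: "A \<subseteq> V" "card A = packing_number d \<epsilon> V" "eps_distinguishable d \<epsilon> A" by blast
  show ?thesis using assms(2)[OF A(1) A(3)] A(2) by simp
qed

lemma pack_finite_ge: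
  assumes "finite V" "A \<subseteq> V" "eps_distinguishable d \<epsilon> A"
  shows "card A \<le> packing_number d \<epsilon> V"
proof -
  let ?P = "\<lambda>n. \<exists>A. A \<subseteq> V \<and> finite A \<and> card A = n \<and> eps_distinguishable d \<epsilon> A"
  have bnd: "y \<le> card V" if "?P y" for y
  proof -
    from that obtain A where A: "A \<subseteq> V" "card A = y" by blast
    have "card A \<le> card V" using card_mono[OF assms(1) A(1)] .
    then show ?thesis using A(2) by simp
  qed
  show ?thesis
    unfolding packing_number_def
    using Greatest_le_nat[of ?P "card A" "card V", OF _ bnd] assms finite_subset[OF assms(2,1)] by blast
qed

lemma three_point:
  assumes ms: "Metric_space S d" and V: "V = {u, v, w}" "V \<subseteq> S"
    and eq: "covering_number S d m V = packing_number d m V"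
    and m: "m = max (d u w) (d w v)" "m > 0"
  shows "d u v \<le> m"
proof (rule ccontr)
  interpret Metric_space S d by (rule ms)
  assume "\<not> d u v \<le> m"
  then have gt: "d u v > m" by simp
  have inS: "u \<in> S" "v \<in> S" "w \<in> S" using V by auto
  have uv: "u \<noteq> v" using gt m inS by auto
  have "eps_distinguishable d m {u, v}"
    using gt commute[of u v] inS unfolding eps_distinguishable_def by auto
  then have "card {u, v} \<le> packing_number d m V"
    using pack_finite_ge[of V "{u,v}" d m] V by auto
  then have p2: "2 \<le> packing_number d m V" using uv by simp
  have "d w u \<le> m" using m commute[of u w] inS by simp
  moreover have "d w v \<le> m" using m by simp
  moreover have "d w w \<le> m" using m inS by simp
  ultimately have "is_eps_net S d m {w} V"
    using V inS unfolding is_eps_net_def by auto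
  then have "covering_number S d m V \<le> card {w}"
    unfolding covering_number_def by (intro Least_le) (use V in auto)
  then show False using p2 eq by simp
qed

lemma cov_empty: "covering_number M d \<epsilon> {} = 0"
proof -
  let ?Q = "\<lambda>n. \<exists>C. C \<subseteq> {} \<and> finite C \<and> card C = n \<and> is_eps_net M d \<epsilon> C {}"
  have "?Q 0" by (rule exI[of _ "{}"]) (simp add: is_eps_net_def)
  then have "covering_number M d \<epsilon> {} \<le> 0"
    unfolding covering_number_def using Least_le[of ?Q 0] by blast
  then show ?thesis by simp
qed

lemma pack_empty: "packing_number d \<epsilon> {} = 0"
proof -
  have "packing_number d \<epsilon> {} \<le> 0"
    by (rule pack_finite_le) auto
  then show ?thesis by simp
qed

lemma pair_le1:
  assumes "A \<subseteq> {a, b}" "eps_distinguishable dd e A" "dd a b \<le> e"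
  shows "card A \<le> 1"
proof (cases "a \<in> A \<and> b \<in> A \<and> a \<noteq> b")
  case True
  then have "dd a b > e" using assms(2) unfolding eps_distinguishable_def by blast
  then show ?thesis using assms(3) by simp
next
  case False
  then have "A \<subseteq> {a} \<or> A \<subseteq> {b}" using assms(1) by blast
  then show ?thesis
  proof
    assume "A \<subseteq> {a}" then show ?thesis using card_mono[of "{a}" A] by simp
  next
    assume "A \<subseteq> {b}" then show ?thesis using card_mono[of "{b}" A] by simp
  qed
qed

lemma dir1:
  fixes X :: "'a set" and dX :: "'a \<Rightarrow> 'a \<Rightarrow> real"
    and Y :: "'b set" and dY :: "'b \<Rightarrow> 'b \<Rightarrow> real"
    and d :: "'a \<times> 'b \<Rightarrow> 'a \<times> 'b \<Rightarrow> real"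
  assumes msX: "Metric_space X dX" and msY: "Metric_space Y dY" and msP: "Metric_space (X \<times> Y) d"
    and pdp: "partial_distance_preserving X dX Y dY d"
    and sup: "\<forall>p\<in>X \<times> Y. \<forall>q\<in>X \<times> Y. sup_dist dX dY p q \<le> d p q"
    and um: "ultrametric_on (X \<times> Y) d"
    and cW: "compactin (Metric_space.mtopology X dX) W"
    and cZ: "compactin (Metric_space.mtopology Y dY) Z" and eps: "\<epsilon> > 0"
  shows "covering_number (X \<times> Y) d \<epsilon> (W \<times> Z) = packing_number d \<epsilon> (W \<times> Z) \<and>
       packing_number d \<epsilon> (W \<times> Z) = packing_number dX \<epsilon> W * packing_number dY \<epsilon> Z"
proof -
  interpret X: Metric_space X dX by (rule msX)
  interpret Y: Metric_space Y dY by (rule msY)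
  interpret P: Metric_space "X \<times> Y" d by (rule msP)
  have pX: "d (x1, y) (x2, y) = dX x1 x2" if "x1 \<in> X" "x2 \<in> X" "y \<in> Y" for x1 x2 y
    using pdp that unfolding partial_distance_preserving_def by blast
  have pY: "d (x, y1) (x, y2) = dY y1 y2" if "x \<in> X" "y1 \<in> Y" "y2 \<in> Y" for x y1 y2
    using pdp that unfolding partial_distance_preserving_def by blast
  have sd: "max (dX (fst p) (fst q)) (dY (snd p) (snd q)) \<le> d p q" if "p \<in> X \<times> Y" "q \<in> X \<times> Y" for p q
    using sup that unfolding sup_dist_def by blast
  have WX: "W \<subseteq> X" using compactin_subset_topspace[OF cW] by simp
  have ZY: "Z \<subseteq> Y" using compactin_subset_topspace[OF cZ] by simp
  show ?thesis
  proof (cases "W = {} \<or> Z = {}")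
    case True
    then have e: "W \<times> Z = {}" by auto
    have "packing_number dX \<epsilon> W * packing_number dY \<epsilon> Z = 0"
      using True by (auto simp add: pack_empty)
    then show ?thesis unfolding e by (simp add: cov_empty pack_empty)
  next
    case False
    then obtain x0 y0 where x0: "x0 \<in> W" and y0: "y0 \<in> Z" by blast
    have umW: "ultrametric_on W dX" unfolding ultrametric_on_def
    proof (intro ballI)
      fix a b c assume abc: "a \<in> W" "b \<in> W" "c \<in> W"
      have "d (a, y0) (b, y0) \<le> max (d (a, y0) (c, y0)) (d (c, y0) (b, y0))"
        using um abc WX y0 ZY unfolding ultrametric_on_def by blast
      moreover have "a \<in> X" "b \<in> X" "c \<in> X" "y0 \<in> Y" using abc WX y0 ZY by auto
      ultimately show "dX a b \<le> max (dX a c) (dX c b)" using pX[of a b y0] pX[of a c y0] pX[of c b y0] by simp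
    qed
    have umZ: "ultrametric_on Z dY" unfolding ultrametric_on_def
    proof (intro ballI)
      fix a b c assume abc: "a \<in> Z" "b \<in> Z" "c \<in> Z"
      have "d (x0, a) (x0, b) \<le> max (d (x0, a) (x0, c)) (d (x0, c) (x0, b))"
        using um abc ZY x0 WX unfolding ultrametric_on_def by blast
      moreover have "a \<in> Y" "b \<in> Y" "c \<in> Y" "x0 \<in> X" using abc ZY x0 WX by auto
      ultimately show "dY a b \<le> max (dY a c) (dY c b)" using pY[of x0 a b] pY[of x0 a c] pY[of x0 c b] by simp
    qed
    have VP: "W \<times> Z \<subseteq> X \<times> Y" using WX ZY by auto
    have umV: "ultrametric_on (W \<times> Z) d"
      unfolding ultrametric_on_def
    proof (intro ballI)
      fix p q r assume "p \<in> W \<times> Z" "q \<in> W \<times> Z" "r \<in> W \<times> Z"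
      then have "p \<in> X \<times> Y" "q \<in> X \<times> Y" "r \<in> X \<times> Y" using VP by (auto simp del: mem_Sigma_iff)
      then show "d p q \<le> max (d p r) (d r q)" using um unfolding ultrametric_on_def by blast
    qed
    have "X.mtotally_bounded W" by (rule X.compactin_imp_mtotally_bounded[OF cW])
    then have "\<forall>\<epsilon>>0. \<exists>K. finite K \<and> K \<subseteq> W \<and> W \<subseteq> (\<Union>x\<in>K. X.mball x \<epsilon>)"
      unfolding X.mtotally_bounded_def .
    then have "\<exists>K. finite K \<and> K \<subseteq> W \<and> W \<subseteq> (\<Union>x\<in>K. X.mball x \<epsilon>)"
      using eps by blast
    then obtain KW where KW: "finite KW" "KW \<subseteq> W" "W \<subseteq> (\<Union>x\<in>KW. X.mball x \<epsilon>)"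
      by (elim exE conjE)
    have KWn: "is_eps_net X dX \<epsilon> KW W"
      unfolding is_eps_net_def
    proof (rule order_trans[OF KW(3)])
      show "(\<Union>x\<in>KW. X.mball x \<epsilon>) \<subseteq> (\<Union>x\<in>KW. X.mcball x \<epsilon>)"
        by (intro UN_mono order_refl X.mball_subset_mcball)
    qed
    have "Y.mtotally_bounded Z" by (rule Y.compactin_imp_mtotally_bounded[OF cZ])
    then have "\<forall>\<epsilon>>0. \<exists>K. finite K \<and> K \<subseteq> Z \<and> Z \<subseteq> (\<Union>x\<in>K. Y.mball x \<epsilon>)"
      unfolding Y.mtotally_bounded_def .
    then have "\<exists>K. finite K \<and> K \<subseteq> Z \<and> Z \<subseteq> (\<Union>x\<in>K. Y.mball x \<epsilon>)"
      using eps by blast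
    then obtain KZ where KZ: "finite KZ" "KZ \<subseteq> Z" "Z \<subseteq> (\<Union>x\<in>KZ. Y.mball x \<epsilon>)"
      by (elim exE conjE)
    have KZn: "is_eps_net Y dY \<epsilon> KZ Z"
      unfolding is_eps_net_def
    proof (rule order_trans[OF KZ(3)])
      show "(\<Union>x\<in>KZ. Y.mball x \<epsilon>) \<subseteq> (\<Union>x\<in>KZ. Y.mcball x \<epsilon>)"
        by (intro UN_mono order_refl Y.mball_subset_mcball)
    qed
    have netprod: "is_eps_net (X \<times> Y) d \<epsilon> (A \<times> B) (W \<times> Z)"
      if AB: "A \<subseteq> W" "B \<subseteq> Z" "is_eps_net X dX \<epsilon> A W" "is_eps_net Y dY \<epsilon> B Z" for A B
      unfolding is_eps_net_def
    proof
      fix p assume p: "p \<in> W \<times> Z"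
      obtain w z where wz: "p = (w, z)" "w \<in> W" "z \<in> Z" using p by blast
      obtain a where a: "a \<in> A" "w \<in> X.mcball a \<epsilon>" using AB(3) wz unfolding is_eps_net_def by blast
      obtain b where b: "b \<in> B" "z \<in> Y.mcball b \<epsilon>" using AB(4) wz unfolding is_eps_net_def by blast
      have inX: "a \<in> X" "w \<in> X" using a AB WX wz by auto
      have inY: "b \<in> Y" "z \<in> Y" using b AB ZY wz by auto
      have "d (a, b) (w, z) \<le> max (d (a, b) (w, b)) (d (w, b) (w, z))"
        using um inX inY unfolding ultrametric_on_def by blast
      also have "\<dots> = max (dX a w) (dY b z)" using pX pY inX inY by simp
      also have "\<dots> \<le> \<epsilon>" using a b by simp
      finally have "(w, z) \<in> P.mcball (a, b) \<epsilon>" using inX inY by simp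
      then show "p \<in> (\<Union>c\<in>A \<times> B. P.mcball c \<epsilon>)" using a b wz by blast
    qed
    have KWZn: "is_eps_net (X \<times> Y) d \<epsilon> (KW \<times> KZ) (W \<times> Z)"
      by (rule netprod[OF KW(2) KZ(2) KWn KZn])
    have KWZ: "KW \<times> KZ \<subseteq> W \<times> Z" "finite (KW \<times> KZ)" using KW KZ by auto
    note FW = pack_facts[OF msX WX umW KW(2) KW(1) KWn eps]
    note FZ = pack_facts[OF msY ZY umZ KZ(2) KZ(1) KZn eps]
    note FV = pack_facts[OF msP VP umV KWZ KWZn eps]
    obtain A0 where A0: "A0 \<subseteq> W" "finite A0" "card A0 = packing_number dX \<epsilon> W"
      "eps_distinguishable dX \<epsilon> A0" "is_eps_net X dX \<epsilon> A0 W" using FW(1) by blast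
    obtain B0 where B0: "B0 \<subseteq> Z" "finite B0" "card B0 = packing_number dY \<epsilon> Z"
      "eps_distinguishable dY \<epsilon> B0" "is_eps_net Y dY \<epsilon> B0 Z" using FZ(1) by blast
    have cAB: "card (A0 \<times> B0) = packing_number dX \<epsilon> W * packing_number dY \<epsilon> Z"
      using card_cartesian_product[of A0 B0] A0(3) B0(3) by simp
    have ABsub: "A0 \<times> B0 \<subseteq> W \<times> Z" "finite (A0 \<times> B0)" using A0 B0 by auto
    have dAB: "eps_distinguishable d \<epsilon> (A0 \<times> B0)"
      unfolding eps_distinguishable_def
    proof (intro ballI impI)
      fix p q assume pq: "p \<in> A0 \<times> B0" "q \<in> A0 \<times> B0" "p \<noteq> q"
      have PQ: "p \<in> X \<times> Y" "q \<in> X \<times> Y" using pq ABsub VP by auto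
      have "\<epsilon> < max (dX (fst p) (fst q)) (dY (snd p) (snd q))"
      proof (cases "fst p = fst q")
        case True
        then have "snd p \<noteq> snd q" using pq(3) by (simp add: prod_eq_iff)
        then have "dY (snd p) (snd q) > \<epsilon>" using B0(4) pq unfolding eps_distinguishable_def by auto
        then show ?thesis by simp
      next
        case False
        then have "dX (fst p) (fst q) > \<epsilon>" using A0(4) pq unfolding eps_distinguishable_def by auto
        then show ?thesis by simp
      qed
      also have "\<dots> \<le> d p q" by (rule sd[OF PQ])
      finally show "\<epsilon> < d p q" .
    qed
    have ge: "card (A0 \<times> B0) \<le> packing_number d \<epsilon> (W \<times> Z)"
      by (rule FV(2)[OF ABsub dAB])
    have nAB: "is_eps_net (X \<times> Y) d \<epsilon> (A0 \<times> B0) (W \<times> Z)"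
      by (rule netprod[OF A0(1) B0(1) A0(5) B0(5)])
    let ?Q = "\<lambda>n. \<exists>C. C \<subseteq> W \<times> Z \<and> finite C \<and> card C = n \<and> is_eps_net (X \<times> Y) d \<epsilon> C (W \<times> Z)"
    have "?Q (card (A0 \<times> B0))" using ABsub nAB by blast
    then have "covering_number (X \<times> Y) d \<epsilon> (W \<times> Z) \<le> card (A0 \<times> B0)"
      unfolding covering_number_def using Least_le[of ?Q] by blast
    then show ?thesis using FV(3) ge cAB by simp
  qed
qed

lemma dir2:
  fixes X :: "'a set" and dX :: "'a \<Rightarrow> 'a \<Rightarrow> real"
    and Y :: "'b set" and dY :: "'b \<Rightarrow> 'b \<Rightarrow> real"
    and d :: "'a \<times> 'b \<Rightarrow> 'a \<times> 'b \<Rightarrow> real"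
  assumes msX: "Metric_space X dX" and msY: "Metric_space Y dY" and msP: "Metric_space (X \<times> Y) d"
    and pdp: "partial_distance_preserving X dX Y dY d"
    and sup: "\<forall>p\<in>X \<times> Y. \<forall>q\<in>X \<times> Y. sup_dist dX dY p q \<le> d p q"
    and R: "\<forall>W Z \<epsilon>. compactin (Metric_space.mtopology X dX) W \<and>
              compactin (Metric_space.mtopology Y dY) Z \<and> \<epsilon> > 0 \<longrightarrow>
       covering_number (X \<times> Y) d \<epsilon> (W \<times> Z) = packing_number d \<epsilon> (W \<times> Z) \<and>
       packing_number d \<epsilon> (W \<times> Z) = packing_number dX \<epsilon> W * packing_number dY \<epsilon> Z"
  shows "ultrametric_on (X \<times> Y) d"
proof -
  interpret X: Metric_space X dX by (rule msX)
  interpret Y: Metric_space Y dY by (rule msY)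
  interpret P: Metric_space "X \<times> Y" d by (rule msP)
  have pX: "d (x1, y) (x2, y) = dX x1 x2" if "x1 \<in> X" "x2 \<in> X" "y \<in> Y" for x1 x2 y
    using pdp that unfolding partial_distance_preserving_def by blast
  have pY: "d (x, y1) (x, y2) = dY y1 y2" if "x \<in> X" "y1 \<in> Y" "y2 \<in> Y" for x y1 y2
    using pdp that unfolding partial_distance_preserving_def by blast
  have sd: "max (dX (fst p) (fst q)) (dY (snd p) (snd q)) \<le> d p q" if "p \<in> X \<times> Y" "q \<in> X \<times> Y" for p q
    using sup that unfolding sup_dist_def by blast
  have step1: "d (x1, y1) (x2, y2) \<le> max (dX x1 x2) (dY y1 y2)"
    if xy: "x1 \<in> X" "x2 \<in> X" "y1 \<in> Y" "y2 \<in> Y" for x1 x2 y1 y2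
  proof (cases "x1 = x2")
    case True then show ?thesis using pY[of x1 y1 y2] xy by simp
  next
    case x12: False
    show ?thesis
    proof (cases "y1 = y2")
      case True then show ?thesis using pX[of x1 x2 y1] xy by simp
    next
      case y12: False
      define e where "e = max (dX x1 x2) (dY y1 y2)"
      have "dX x1 x2 > 0" using x12 xy by simp
      then have e0: "e > 0" unfolding e_def by simp
      define W where "W = {x1, x2}"
      define Z where "Z = {y1, y2}"
      have cW: "compactin X.mtopology W" unfolding W_def using xy by (intro finite_imp_compactin) auto
      have cZ: "compactin Y.mtopology Z" unfolding Z_def using xy by (intro finite_imp_compactin) auto
      have eq: "packing_number d e (W \<times> Z) = packing_number dX e W * packing_number dY e Z"
        using R cW cZ e0 by blast
      have pW: "packing_number dX e W \<le> 1"
        unfolding W_def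
        apply (rule pack_finite_le)
         apply simp
        apply (erule pair_le1)
         apply assumption
        apply (simp add: e_def)
        done
      have pZ: "packing_number dY e Z \<le> 1"
        unfolding Z_def
        apply (rule pack_finite_le)
         apply simp
        apply (erule pair_le1)
         apply assumption
        apply (simp add: e_def)
        done
      have le1: "packing_number d e (W \<times> Z) \<le> 1"
        using mult_le_mono[OF pW pZ] eq by simp
      show ?thesis
      proof (rule ccontr)
        assume "\<not> ?thesis"
        then have gt: "d (x1, y1) (x2, y2) > e" unfolding e_def by linarith
        have ne: "(x1, y1) \<noteq> (x2, y2)" using x12 by simp
        have "eps_distinguishable d e {(x1, y1), (x2, y2)}"
          unfolding eps_distinguishable_def using gt P.commute[of "(x1, y1)" "(x2, y2)"] by auto
        then have "card {(x1, y1), (x2, y2)} \<le> packing_number d e (W \<times> Z)"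
          using pack_finite_ge[of "W \<times> Z" "{(x1, y1), (x2, y2)}" d e] unfolding W_def Z_def by auto
        then show False using le1 ne by simp
      qed
    qed
  qed
  have umX: "dX a b \<le> max (dX a c) (dX c b)" if abc: "a \<in> X" "b \<in> X" "c \<in> X" "y0 \<in> Y" for a b c y0
  proof (rule ccontr)
    assume "\<not> ?thesis"
    then have gt: "dX a b > max (dX a c) (dX c b)" by linarith
    define m where "m = max (dX a c) (dX c b)"
    have "a \<noteq> c"
    proof
      assume "a = c" then show False using gt abc by simp
    qed
    then have m0: "m > 0" unfolding m_def using abc by (simp add: less_max_iff_disj)
    define V where "V = {(a, y0), (b, y0), (c, y0)}"
    have VWZ: "V = {a, b, c} \<times> {y0}" unfolding V_def by auto
    have cW: "compactin X.mtopology {a, b, c}" using abc by (intro finite_imp_compactin) auto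
    have cZ: "compactin Y.mtopology {y0}" using abc by (intro finite_imp_compactin) auto
    have eq: "covering_number (X \<times> Y) d m V = packing_number d m V"
      unfolding VWZ using R cW cZ m0 by blast
    have mm: "m = max (d (a, y0) (c, y0)) (d (c, y0) (b, y0))"
      unfolding m_def using pX[of a c y0] pX[of c b y0] abc by simp
    have "d (a, y0) (b, y0) \<le> m"
      by (rule three_point[OF msP V_def _ eq mm m0]) (use abc in \<open>auto simp: V_def\<close>)
    then show False using gt pX[of a b y0] abc unfolding m_def by simp
  qed
  have umY: "dY a b \<le> max (dY a c) (dY c b)" if abc: "a \<in> Y" "b \<in> Y" "c \<in> Y" "x0 \<in> X" for a b c x0
  proof (rule ccontr)
    assume "\<not> ?thesis"
    then have gt: "dY a b > max (dY a c) (dY c b)" by linarith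
    define m where "m = max (dY a c) (dY c b)"
    have "a \<noteq> c"
    proof
      assume "a = c" then show False using gt abc by simp
    qed
    then have m0: "m > 0" unfolding m_def using abc by (simp add: less_max_iff_disj)
    define V where "V = {(x0, a), (x0, b), (x0, c)}"
    have VWZ: "V = {x0} \<times> {a, b, c}" unfolding V_def by auto
    have cZ: "compactin Y.mtopology {a, b, c}" using abc by (intro finite_imp_compactin) auto
    have cW: "compactin X.mtopology {x0}" using abc by (intro finite_imp_compactin) auto
    have eq: "covering_number (X \<times> Y) d m V = packing_number d m V"
      unfolding VWZ using R cW cZ m0 by blast
    have mm: "m = max (d (x0, a) (x0, c)) (d (x0, c) (x0, b))"
      unfolding m_def using pY[of x0 a c] pY[of x0 c b] abc by simp
    have "d (x0, a) (x0, b) \<le> m"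
      by (rule three_point[OF msP V_def _ eq mm m0]) (use abc in \<open>auto simp: V_def\<close>)
    then show False using gt pY[of x0 a b] abc unfolding m_def by simp
  qed
  show ?thesis
    unfolding ultrametric_on_def
  proof (intro ballI)
    fix p q r assume pqr: "p \<in> X \<times> Y" "q \<in> X \<times> Y" "r \<in> X \<times> Y"
    obtain x1 y1 where p: "p = (x1, y1)" "x1 \<in> X" "y1 \<in> Y" using pqr(1) by blast
    obtain x2 y2 where q: "q = (x2, y2)" "x2 \<in> X" "y2 \<in> Y" using pqr(2) by blast
    obtain x3 y3 where r: "r = (x3, y3)" "x3 \<in> X" "y3 \<in> Y" using pqr(3) by blast
    have "d p q \<le> max (dX x1 x2) (dY y1 y2)" using step1 p q by simp
    also have "\<dots> \<le> max (max (dX x1 x3) (dX x3 x2)) (max (dY y1 y3) (dY y3 y2))"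
      using umX[of x1 x2 x3 y1] umY[of y1 y2 y3 x1] p q r by (intro max.mono) auto
    also have "\<dots> \<le> max (d p r) (d r q)"
    proof -
      have "max (dX x1 x3) (dY y1 y3) \<le> d p r" using sd[of p r] pqr p r by simp
      moreover have "max (dX x3 x2) (dY y3 y2) \<le> d r q" using sd[of r q] pqr q r by simp
      ultimately show ?thesis by linarith
    qed
    finally show "d p q \<le> max (d p r) (d r q)" .
  qed
qed

theorem proposition4p4:
  fixes X :: "'a set" and dX :: "'a \<Rightarrow> 'a \<Rightarrow> real"
    and Y :: "'b set" and dY :: "'b \<Rightarrow> 'b \<Rightarrow> real"
    and d :: "'a \<times> 'b \<Rightarrow> 'a \<times> 'b \<Rightarrow> real"
  assumes "Metric_space X dX" and "Metric_space Y dY" and "Metric_space (X \<times> Y) d"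
    and "partial_distance_preserving X dX Y dY d"
    and "\<forall>p\<in>X \<times> Y. \<forall>q\<in>X \<times> Y. sup_dist dX dY p q \<le> d p q"
  shows "ultrametric_on (X \<times> Y) d \<longleftrightarrow>
    (\<forall>W Z \<epsilon>. compactin (Metric_space.mtopology X dX) W \<and>
              compactin (Metric_space.mtopology Y dY) Z \<and> \<epsilon> > 0 \<longrightarrow>
       covering_number (X \<times> Y) d \<epsilon> (W \<times> Z) = packing_number d \<epsilon> (W \<times> Z) \<and>
       packing_number d \<epsilon> (W \<times> Z) = packing_number dX \<epsilon> W * packing_number dY \<epsilon> Z)"
proof
  assume "ultrametric_on (X \<times> Y) d"
  then show "\<forall>W Z \<epsilon>. compactin (Metric_space.mtopology X dX) W \<and>
              compactin (Metric_space.mtopology Y dY) Z \<and> \<epsilon> > 0 \<longrightarrow>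
       covering_number (X \<times> Y) d \<epsilon> (W \<times> Z) = packing_number d \<epsilon> (W \<times> Z) \<and>
       packing_number d \<epsilon> (W \<times> Z) = packing_number dX \<epsilon> W * packing_number dY \<epsilon> Z"
    using dir1[OF assms] by blast
next
  assume "\<forall>W Z \<epsilon>. compactin (Metric_space.mtopology X dX) W \<and>
              compactin (Metric_space.mtopology Y dY) Z \<and> \<epsilon> > 0 \<longrightarrow>
       covering_number (X \<times> Y) d \<epsilon> (W \<times> Z) = packing_number d \<epsilon> (W \<times> Z) \<and>
       packing_number d \<epsilon> (W \<times> Z) = packing_number dX \<epsilon> W * packing_number dY \<epsilon> Z"
  then show "ultrametric_on (X \<times> Y) d" by (rule dir2[OF assms])
qed

end
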